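(* Let $p$ be a prime and let $c:\mathbb{Z}\to\{B,R\}$ be a periodic coloring such that for every positive integer $d$ with $p\nmid d$ and every $a\in\mathbb{Z}$, the values $c(a),c(a+d),c(a+2d),c(a+3d)$ are not all equal. Then every period $T\ge1$ of $c$ (i.e. every $T$ with $c(n+T)=c(n)$ for all $n$) satisfies $T\ge p$. *)

theory Defs
  imports "HOL-Computational_Algebra.Primes"
begin

datatype color = B | R

end

theory Submission
  imports Defs
begin

theorem theorem6:
  fixes p :: nat and c :: "int \<Rightarrow> color"
  assumes "prime p"
    and "\<exists>T::int. T \<ge> 1 \<and> (\<forall>n. c (n + T) = c n)"
    and "\<And>d a. d > 0 \<Longrightarrow> \<not> (int p dvd d) \<Longrightarrow>
           \<not> (c a = c (a + d) \<and> c a = c (a + 2*d) \<and> c a = c (a + 3*d))"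
  shows "\<forall>T::int. T \<ge> 1 \<and> (\<forall>n. c (n + T) = c n) \<longrightarrow> T \<ge> int p"
proof (intro allI impI)
  fix T :: int
  assume h: "T \<ge> 1 \<and> (\<forall>n. c (n + T) = c n)"
  show "T \<ge> int p"
  proof (rule ccontr)
    assume "\<not> T \<ge> int p"
    hence lt: "T < int p" by simp
    have nd: "\<not> int p dvd T"
    proof
      assume "int p dvd T"
      then have "int p \<le> T" using h by (intro zdvd_imp_le) auto
      with lt show False by simp
    qed
    have p: "\<And>n. c (n + T) = c n" using h by blast
    have e1: "c (0 + T) = c 0" using p by blast
    have e2: "c (0 + 2*T) = c 0" using p[of "0+T"] p[of 0] by (simp add: algebra_simps)
    have e3: "c (0 + 3*T) = c 0" using p[of "0+2*T"] e2 by (simp add: algebra_simps)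
    have "T > 0" using h by simp
    from assms(3)[OF this nd, of 0] e1 e2 e3 show False by simp
  qed
qed

end
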